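(* Let $V$ be a complex normed vector space and $A\subseteq V$ convex. Then $A$ is norm closed if and only if $A$ is s.a.-sequentially closed. In particular, a linear subspace of $V$ is norm closed if and only if it is s.a.-sequentially closed.
   Context: $l^{\infty}(V)$ is the space of bounded sequences $x=\{x_n\}_{n=1}^\infty$ in $V$ with norm $\|x\|_\infty=\sup_n\|x_n\|_V$. For $v\in V$, $\widetilde v=\{v,v,\dots\}$. $T$ is the left shift: $T\{x_1,x_2,\dots\}=\{x_2,x_3,\dots\}$. A Banach limit functional is a bounded linear functional $L$ on $l^\infty(V)$ with $\|L\|\le1$ and $L(Tx)=L(x)$ for all $x$. A sequence $x\in l^\infty(V)$ is strongly almost convergent to $v\in V$ if $L(x)=L(\widetilde v)$ for every Banach limit functional $L$. A set $A\subseteq V$ is s.a.-sequentially closed if whenever $\{x_n\}_{n=1}^\infty$ is a bounded sequence in $A$ that is strongly almost convergent to some $v\in V$, then $v\in A$. *)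

theory Defs
  imports "HOL-Analysis.Analysis"
begin

class complex_vector = real_vector +
  fixes scaleC :: "complex \<Rightarrow> 'a \<Rightarrow> 'a"  (infixr \<open>*\<^sub>C\<close> 75)
  assumes scaleC_add_right: "a *\<^sub>C (x + y) = a *\<^sub>C x + a *\<^sub>C y"
    and scaleC_add_left: "(a + b) *\<^sub>C x = a *\<^sub>C x + b *\<^sub>C x"
    and scaleC_scaleC: "a *\<^sub>C (b *\<^sub>C x) = (a * b) *\<^sub>C x"
    and scaleC_one: "1 *\<^sub>C x = x"
    and scaleR_scaleC: "r *\<^sub>R x = complex_of_real r *\<^sub>C x"

class complex_normed_vector = complex_vector + real_normed_vector +
  assumes norm_scaleC: "norm (a *\<^sub>C x) = cmod a * norm x"

definition csubspace :: "'a::complex_vector set \<Rightarrow> bool" where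
  "csubspace S \<longleftrightarrow> 0 \<in> S \<and> (\<forall>x\<in>S. \<forall>y\<in>S. x + y \<in> S) \<and> (\<forall>c. \<forall>x\<in>S. c *\<^sub>C x \<in> S)"

definition linf :: "(nat \<Rightarrow> 'a::real_normed_vector) \<Rightarrow> bool" where
  "linf x \<longleftrightarrow> bounded (range x)"

definition linf_norm :: "(nat \<Rightarrow> 'a::real_normed_vector) \<Rightarrow> real" where
  "linf_norm x = (SUP n. norm (x n))"

text \<open>Banach limit functional: a complex-linear functional on l-infinity(V) of norm at
most 1 that is invariant under the left shift. (Values of L outside l-infinity(V)
are irrelevant.)\<close>
definition banach_limit :: "((nat \<Rightarrow> 'a::complex_normed_vector) \<Rightarrow> complex) \<Rightarrow> bool" where
  "banach_limit L \<longleftrightarrow>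
     (\<forall>x y. linf x \<longrightarrow> linf y \<longrightarrow> L (\<lambda>n. x n + y n) = L x + L y) \<and>
     (\<forall>c x. linf x \<longrightarrow> L (\<lambda>n. c *\<^sub>C x n) = c * L x) \<and>
     (\<forall>x. linf x \<longrightarrow> cmod (L x) \<le> linf_norm x) \<and>
     (\<forall>x. linf x \<longrightarrow> L (\<lambda>n. x (Suc n)) = L x)"

definition strongly_almost_convergent :: "(nat \<Rightarrow> 'a::complex_normed_vector) \<Rightarrow> 'a \<Rightarrow> bool" where
  "strongly_almost_convergent x v \<longleftrightarrow>
     linf x \<and> (\<forall>L. banach_limit L \<longrightarrow> L x = L (\<lambda>n. v))"

definition sa_seq_closed :: "'a::complex_normed_vector set \<Rightarrow> bool" where
  "sa_seq_closed A \<longleftrightarrow>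
     (\<forall>x v. (\<forall>n. x n \<in> A) \<and> linf x \<and> strongly_almost_convergent x v \<longrightarrow> v \<in> A)"

end

theory Submission
  imports Defs
begin


definition okG :: "('b::real_vector \<Rightarrow> real) \<Rightarrow> 'b \<Rightarrow> ('b \<times> real) set \<Rightarrow> bool" where
  "okG p z G \<longleftrightarrow> (\<forall>x a y b. (x,a)\<in>G \<longrightarrow> (y,b)\<in>G \<longrightarrow> (x+y,a+b)\<in>G) \<and>
     (\<forall>x a c. (x,a)\<in>G \<longrightarrow> (c *\<^sub>R x, c*a) \<in> G) \<and> (\<forall>x a. (x,a)\<in>G \<longrightarrow> a \<le> p x) \<and> (z, p z) \<in> G"

lemma okG_unique:
  assumes ok: "okG p z G" and p0: "p 0 = 0" and h: "(x,a)\<in>G" "(x,b)\<in>G"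
  shows "a = b"
proof -
  have "((-1) *\<^sub>R x, (-1)*b) \<in> G" using ok h unfolding okG_def by blast
  then have "(x + (-1) *\<^sub>R x, a + (-1)*b) \<in> G" using ok h unfolding okG_def by blast
  then have g: "(0, a - b) \<in> G" by simp
  then have "((-1) *\<^sub>R 0, (-1)*(a-b)) \<in> G" using ok unfolding okG_def by blast
  then have "(0, b - a) \<in> G" by simp
  then have "b - a \<le> 0" using ok p0 unfolding okG_def by force
  moreover have "a - b \<le> 0" using g ok p0 unfolding okG_def by force
  ultimately show ?thesis by simp
qed

lemma hahn_banach:
  fixes p :: "'b::real_vector \<Rightarrow> real"
  assumes sub: "\<And>x y. p (x + y) \<le> p x + p y"
    and hom: "\<And>c x. c > 0 \<Longrightarrow> p (c *\<^sub>R x) = c * p x"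
  shows "\<exists>f. (\<forall>x y. f (x + y) = f x + f y) \<and> (\<forall>c x. f (c *\<^sub>R x) = c * f x) \<and>
             (\<forall>x. f x \<le> p x) \<and> f z = p z"
proof -
  have p0: "p 0 = 0" using hom[of 2 0] by simp
  have pneg: "c * p x \<le> p (c *\<^sub>R x)" for c x
  proof (cases "c > 0")
    case True then show ?thesis using hom by simp
  next
    case False
    show ?thesis
    proof (cases "c = 0")
      case True then show ?thesis using p0 by simp
    next
      case False2: False
      with False have "-c > 0" by simp
      have "0 \<le> p (c *\<^sub>R x) + p ((-c) *\<^sub>R x)" using sub[of "c *\<^sub>R x" "(-c) *\<^sub>R x"] p0
        by (simp add: scaleR_left.minus)
      with hom[OF \<open>-c > 0\<close>, of x] show ?thesis by simp
    qed
  qed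
  define G0 where "G0 = {(t *\<^sub>R z, t * p z) | t. True}"
  have okG0: "okG p z G0"
    unfolding okG_def G0_def
  proof (intro conjI allI impI)
    fix x a y b assume "(x, a) \<in> {(t *\<^sub>R z, t * p z) |t. True}" "(y, b) \<in> {(t *\<^sub>R z, t * p z) |t. True}"
    then obtain s t where "x = s *\<^sub>R z" "a = s * p z" "y = t *\<^sub>R z" "b = t * p z" by blast
    then show "(x + y, a + b) \<in> {(t *\<^sub>R z, t * p z) |t. True}"
      by (auto intro!: exI[of _ "s + t"] simp: scaleR_add_left distrib_right)
  next
    fix x a c assume "(x, a) \<in> {(t *\<^sub>R z, t * p z) |t. True}"
    then obtain s where "x = s *\<^sub>R z" "a = s * p z" by blast
    then show "(c *\<^sub>R x, c * a) \<in> {(t *\<^sub>R z, t * p z) |t. True}"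
      by (auto intro!: exI[of _ "c * s"])
  next
    fix x a assume "(x, a) \<in> {(t *\<^sub>R z, t * p z) |t. True}"
    then obtain s where "x = s *\<^sub>R z" "a = s * p z" by blast
    then show "a \<le> p x" using pneg by simp
  next
    show "(z, p z) \<in> {(t *\<^sub>R z, t * p z) |t. True}" by (auto intro!: exI[of _ 1])
  qed
  define AA where "AA = {G. okG p z G}"
  have "\<exists>M\<in>AA. \<forall>X\<in>AA. M \<subseteq> X \<longrightarrow> X = M"
  proof (rule Zorn_Lemma2, intro ballI)
    fix C assume C: "C \<in> chains AA"
    show "\<exists>U\<in>AA. \<forall>X\<in>C. X \<subseteq> U"
    proof (cases "C = {}")
      case True then show ?thesis using okG0 AA_def by blast
    next
      case False
      have CA: "\<And>G. G \<in> C \<Longrightarrow> okG p z G" using C unfolding chains_def AA_def by blast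
      have ch: "\<And>G H. G \<in> C \<Longrightarrow> H \<in> C \<Longrightarrow> G \<subseteq> H \<or> H \<subseteq> G"
        using C unfolding chains_def chain_subset_def by blast
      have "okG p z (\<Union>C)"
        unfolding okG_def
      proof (intro conjI allI impI)
        fix x a y b assume "(x, a) \<in> \<Union>C" "(y, b) \<in> \<Union>C"
        then obtain G H where GH: "G \<in> C" "H \<in> C" "(x,a) \<in> G" "(y,b) \<in> H" by blast
        from ch[OF GH(1,2)] show "(x + y, a + b) \<in> \<Union>C"
        proof
          assume "G \<subseteq> H" then show ?thesis using GH CA[of H] unfolding okG_def by blast
        next
          assume "H \<subseteq> G" then show ?thesis using GH CA[of G] unfolding okG_def by blast
        qed
      next
        fix x a c assume "(x, a) \<in> \<Union>C"
        then show "(c *\<^sub>R x, c * a) \<in> \<Union>C" using CA unfolding okG_def by blast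
      next
        fix x a assume "(x, a) \<in> \<Union>C"
        then show "a \<le> p x" using CA unfolding okG_def by blast
      next
        show "(z, p z) \<in> \<Union>C" using False CA unfolding okG_def by blast
      qed
      then show ?thesis unfolding AA_def by blast
    qed
  qed
  then obtain M where MA: "okG p z M" and Mmax: "\<And>X. okG p z X \<Longrightarrow> M \<subseteq> X \<Longrightarrow> X = M"
    unfolding AA_def by blast
  have M0: "(0, 0) \<in> M" using MA unfolding okG_def by (metis mult_zero_left scaleR_zero_left)
  have total: "\<exists>a. (y, a) \<in> M" for y
  proof (rule ccontr)
    assume ny: "\<nexists>a. (y, a) \<in> M"
    define S where "S = {a - p (x - y) | x a. (x, a) \<in> M}"
    have Sne: "S \<noteq> {}" using M0 S_def by blast
    have Sbdd: "bdd_above S"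
    proof (rule bdd_aboveI[of _ "p y"])
      fix s assume "s \<in> S"
      then obtain x a where "s = a - p (x - y)" "(x,a) \<in> M" using S_def by blast
      moreover have "p x \<le> p (x - y) + p y" using sub[of "x - y" y] by simp
      ultimately show "s \<le> p y" using MA unfolding okG_def by force
    qed
    define c where "c = Sup S"
    have c_ge: "a - p (x - y) \<le> c" if "(x,a) \<in> M" for x a
      unfolding c_def by (rule cSup_upper[OF _ Sbdd]) (use that S_def in blast)
    have c_le: "c \<le> p (x' + y) - a'" if "(x',a') \<in> M" for x' a'
      unfolding c_def
    proof (rule cSup_least[OF Sne])
      fix s assume "s \<in> S"
      then obtain x a where xa: "s = a - p (x - y)" "(x,a) \<in> M" using S_def by blast
      have "(x + x', a + a') \<in> M" using MA xa that unfolding okG_def by blast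
      then have "a + a' \<le> p (x + x')" using MA unfolding okG_def by blast
      also have "\<dots> \<le> p (x - y) + p (x' + y)" using sub[of "x - y" "x' + y"] by simp
      finally show "s \<le> p (x' + y) - a'" using xa by simp
    qed
    define M' where "M' = {(x + t *\<^sub>R y, a + t * c) | x a t. (x, a) \<in> M}"
    have dom: "a + t * c \<le> p (x + t *\<^sub>R y)" if xa: "(x,a) \<in> M" for x a t
    proof -
      consider "t > 0" | "t = 0" | "t < 0" by linarith
      then show ?thesis
      proof cases
        case 1
        have "((1/t) *\<^sub>R x, (1/t) * a) \<in> M" using MA xa unfolding okG_def by blast
        from c_le[OF this] have "c \<le> p ((1/t) *\<^sub>R x + y) - a / t" by simp
        moreover have "p (x + t *\<^sub>R y) = t * p ((1/t) *\<^sub>R x + y)"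
          using hom[OF 1, of "(1/t) *\<^sub>R x + y"] 1 by (simp add: scaleR_add_right)
        ultimately show ?thesis using 1 by (simp add: field_simps)
      next
        case 2 then show ?thesis using MA xa unfolding okG_def by simp
      next
        case 3
        define s where "s = - t"
        have s: "s > 0" using 3 s_def by simp
        have "((1/s) *\<^sub>R x, (1/s) * a) \<in> M" using MA xa unfolding okG_def by blast
        from c_ge[OF this] have "a / s - p ((1/s) *\<^sub>R x - y) \<le> c" by simp
        moreover have "p (x + t *\<^sub>R y) = s * p ((1/s) *\<^sub>R x - y)"
          using hom[OF s, of "(1/s) *\<^sub>R x - y"] s s_def by (simp add: scaleR_diff_right)
        ultimately show ?thesis using s s_def by (simp add: field_simps)
      qed
    qed
    have okM': "okG p z M'"
      unfolding okG_def
    proof (intro conjI allI impI)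
      fix x a y' b assume "(x, a) \<in> M'" "(y', b) \<in> M'"
      then obtain x1 a1 t1 x2 a2 t2 where h: "(x1,a1)\<in>M" "(x2,a2)\<in>M" "x = x1 + t1 *\<^sub>R y"
        "a = a1 + t1 * c" "y' = x2 + t2 *\<^sub>R y" "b = a2 + t2 * c" unfolding M'_def by blast
      have "(x1 + x2, a1 + a2) \<in> M" using h MA unfolding okG_def by blast
      moreover have "x + y' = (x1 + x2) + (t1 + t2) *\<^sub>R y" "a + b = (a1 + a2) + (t1 + t2) * c"
        using h by (simp_all add: algebra_simps)
      ultimately show "(x + y', a + b) \<in> M'" unfolding M'_def by blast
    next
      fix x a c' assume "(x, a) \<in> M'"
      then obtain x1 a1 t1 where h: "(x1,a1)\<in>M" "x = x1 + t1 *\<^sub>R y" "a = a1 + t1 * c"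
        unfolding M'_def by blast
      have "(c' *\<^sub>R x1, c' * a1) \<in> M" using h MA unfolding okG_def by blast
      moreover have "c' *\<^sub>R x = c' *\<^sub>R x1 + (c' * t1) *\<^sub>R y" "c' * a = c' * a1 + (c' * t1) * c"
        using h by (simp_all add: algebra_simps)
      ultimately show "(c' *\<^sub>R x, c' * a) \<in> M'" unfolding M'_def by blast
    next
      fix x a assume "(x, a) \<in> M'"
      then show "a \<le> p x" using dom unfolding M'_def by blast
    next
      have "(z + 0 *\<^sub>R y, p z + 0 * c) \<in> M'" using MA unfolding M'_def okG_def by blast
      then show "(z, p z) \<in> M'" by simp
    qed
    have "M \<subseteq> M'"
    proof
      fix w assume "w \<in> M"
      then obtain x a where "w = (x,a)" "(x,a) \<in> M" by (cases w) auto
      then have "(x + 0 *\<^sub>R y, a + 0 * c) \<in> M'" unfolding M'_def by blast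
      then show "w \<in> M'" using \<open>w = (x,a)\<close> by simp
    qed
    with Mmax okM' have "M' = M" by blast
    moreover have "(0 + 1 *\<^sub>R y, 0 + 1 * c) \<in> M'" using M0 unfolding M'_def by blast
    ultimately show False using ny by simp
  qed
  define f where "f x = (SOME a. (x, a) \<in> M)" for x
  have fM: "(x, f x) \<in> M" for x unfolding f_def using total by (metis someI_ex)
  have fu: "(x, a) \<in> M \<Longrightarrow> f x = a" for x a using okG_unique[OF MA p0] fM by blast
  show ?thesis
  proof (intro exI[of _ f] conjI allI)
    fix x y show "f (x + y) = f x + f y" using fM[of x] fM[of y] MA fu unfolding okG_def by blast
  next
    fix c x show "f (c *\<^sub>R x) = c * f x" using fM[of x] MA fu unfolding okG_def by blast
  next
    fix x show "f x \<le> p x" using fM[of x] MA unfolding okG_def by blast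
  next
    show "f z = p z" using MA fu unfolding okG_def by blast
  qed
qed



definition aN :: "nat \<Rightarrow> (nat \<Rightarrow>\<^sub>C 'a::real_normed_vector) \<Rightarrow> real" where
  "aN N y = (SUP k. norm (\<Sum>j<N. apply_bcontfun y (k+j)))"

definition qq :: "(nat \<Rightarrow>\<^sub>C 'a::real_normed_vector) \<Rightarrow> real" where
  "qq y = (INF n. aN (Suc n) y / real (Suc n))"

lemma elem_bound: "norm (\<Sum>j<N. apply_bcontfun y (k+j)) \<le> real N * norm y"
proof -
  have "norm (\<Sum>j<N. apply_bcontfun y (k+j)) \<le> (\<Sum>j<N. norm (apply_bcontfun y (k+j)))"
    by (rule norm_sum)
  also have "\<dots> \<le> (\<Sum>j<N. norm y)" by (rule sum_mono) (rule norm_bounded)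
  finally show ?thesis by simp
qed

lemma aN_bdd: fixes N :: nat shows "bdd_above (range (\<lambda>k. norm (\<Sum>j<N. apply_bcontfun y (k+j))))"
  by (rule bdd_aboveI2[where M="real N * norm y"], rule elem_bound)

lemma aN_upper: "norm (\<Sum>j<N. apply_bcontfun y (k+j)) \<le> aN N y"
  unfolding aN_def by (rule cSUP_upper[OF _ aN_bdd]) simp

lemma aN_le: "aN N y \<le> real N * norm y"
  unfolding aN_def by (rule cSUP_least) (auto intro: elem_bound)

lemma aN_nonneg: "0 \<le> aN N y"
  using aN_upper[where N=N and y=y and k=0] norm_ge_zero order_trans by blast

lemma aN_add: "aN N (y + z) \<le> aN N y + aN N z"
  unfolding aN_def[where N=N and y="y+z"]
proof (rule cSUP_least)
  fix k
  have "norm (\<Sum>j<N. apply_bcontfun (y + z) (k + j)) =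
        norm ((\<Sum>j<N. apply_bcontfun y (k + j)) + (\<Sum>j<N. apply_bcontfun z (k + j)))"
    by (simp add: sum.distrib)
  also have "\<dots> \<le> norm (\<Sum>j<N. apply_bcontfun y (k + j)) + norm (\<Sum>j<N. apply_bcontfun z (k + j))"
    by (rule norm_triangle_ineq)
  also have "\<dots> \<le> aN N y + aN N z" by (intro add_mono aN_upper)
  finally show "norm (\<Sum>j<N. apply_bcontfun (y + z) (k + j)) \<le> aN N y + aN N z" .
qed simp

lemma aN_scale: "c \<ge> 0 \<Longrightarrow> aN N (c *\<^sub>R y) \<le> c * aN N y"
  unfolding aN_def[where N=N and y="c *\<^sub>R y"]
proof (rule cSUP_least)
  fix k assume c: "c \<ge> 0"
  have "norm (\<Sum>j<N. apply_bcontfun (c *\<^sub>R y) (k + j)) = c * norm (\<Sum>j<N. apply_bcontfun y (k + j))"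
    using c by (simp add: scaleR_sum_right[symmetric])
  also have "\<dots> \<le> c * aN N y" by (intro mult_left_mono aN_upper c)
  finally show "norm (\<Sum>j<N. apply_bcontfun (c *\<^sub>R y) (k + j)) \<le> c * aN N y" .
qed simp

lemma aN_block: "aN (M * N) y \<le> real M * aN N y"
  unfolding aN_def[where N="M*N"]
proof (rule cSUP_least)
  fix k
  have "(\<Sum>j<M * N. apply_bcontfun y (k + j)) = (\<Sum>i<M. \<Sum>j<N. apply_bcontfun y (k + (i * N + j)))"
  proof -
    have e: "(\<Sum>j\<in>{m*N..<m*N+N}. apply_bcontfun y (k + j)) = (\<Sum>j<N. apply_bcontfun y (k + (m * N + j)))" for m
      by (simp add: sum.atLeastLessThan_shift_0[of _ "m*N"] atLeast0LessThan comp_def)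
    show ?thesis
      using sum.nat_group[of "\<lambda>j. apply_bcontfun y (k + j)" N M] by (simp add: e)
  qed
  also have "norm \<dots> \<le> (\<Sum>i<M. norm (\<Sum>j<N. apply_bcontfun y (k + (i * N + j))))" by (rule norm_sum)
  also have "\<dots> \<le> (\<Sum>i<M. aN N y)"
  proof (rule sum_mono)
    fix i show "norm (\<Sum>j<N. apply_bcontfun y (k + (i * N + j))) \<le> aN N y"
      using aN_upper[where N=N and y=y and k="k + i * N"] by (simp add: add.assoc)
  qed
  finally show "norm (\<Sum>j<M * N. apply_bcontfun y (k + j)) \<le> real M * aN N y" by simp
qed simp

lemma qq_bdd: "bdd_below (range (\<lambda>n. aN (Suc n) y / real (Suc n)))"
  by (rule bdd_belowI2[of _ 0]) (simp add: aN_nonneg)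

lemma qq_le: "qq y \<le> aN (Suc n) y / real (Suc n)"
  unfolding qq_def by (rule cINF_lower[OF qq_bdd]) simp

lemma qq_ge: "(\<And>n. c \<le> aN (Suc n) y / real (Suc n)) \<Longrightarrow> c \<le> qq y"
  unfolding qq_def by (rule cINF_greatest) auto

lemma qq_sub: "qq (y + z) \<le> qq y + qq z"
proof -
  have "qq (y + z) - aN (Suc n) z / real (Suc n) \<le> qq y" for n
  proof (rule qq_ge)
    fix m
    let ?N = "Suc m * Suc n"
    have "?N = Suc (m * Suc n + n)" by simp
    then have "qq (y + z) \<le> aN ?N (y + z) / real ?N" using qq_le by metis
    also have "\<dots> \<le> (aN ?N y + aN ?N z) / real ?N"
      by (rule divide_right_mono[OF aN_add]) simp
    also have "aN ?N y \<le> real (Suc n) * aN (Suc m) y"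
      using aN_block[where M="Suc n" and N="Suc m" and y=y] by (simp add: mult.commute)
    also have "aN ?N z \<le> real (Suc m) * aN (Suc n) z"
      using aN_block[where M="Suc m" and N="Suc n" and y=z] by simp
    also have "(real (Suc n) * aN (Suc m) y + real (Suc m) * aN (Suc n) z) / real ?N =
       aN (Suc m) y / real (Suc m) + aN (Suc n) z / real (Suc n)"
      by (simp add: field_simps)
    finally show "qq (y + z) - aN (Suc n) z / real (Suc n) \<le> aN (Suc m) y / real (Suc m)"
      by (simp add: divide_right_mono)
  qed
  then have "qq (y + z) - qq y \<le> qq z" by (intro qq_ge) (simp add: algebra_simps)
  then show ?thesis by simp
qed

lemma qq_scale_le: "c > 0 \<Longrightarrow> qq (c *\<^sub>R y) \<le> c * qq y"
proof -
  assume c: "c > 0"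
  have "qq (c *\<^sub>R y) / c \<le> qq y"
  proof (rule qq_ge)
    fix n
    have "qq (c *\<^sub>R y) \<le> aN (Suc n) (c *\<^sub>R y) / real (Suc n)" by (rule qq_le)
    also have "\<dots> \<le> c * aN (Suc n) y / real (Suc n)"
      using aN_scale[where c=c and N="Suc n" and y=y] c by (simp add: divide_right_mono)
    finally show "qq (c *\<^sub>R y) / c \<le> aN (Suc n) y / real (Suc n)" using c
      by (simp add: field_simps)
  qed
  then show ?thesis using c by (simp add: field_simps)
qed

lemma qq_hom: "c > 0 \<Longrightarrow> qq (c *\<^sub>R y) = c * qq y"
proof -
  assume c: "c > 0"
  have "qq y = qq (inverse c *\<^sub>R (c *\<^sub>R y))" using c by simp
  also have "\<dots> \<le> inverse c * qq (c *\<^sub>R y)" using c by (intro qq_scale_le) simp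
  finally have "c * qq y \<le> qq (c *\<^sub>R y)" using c by (simp add: field_simps)
  then show ?thesis using qq_scale_le[OF c, of y] by simp
qed

lemma qq_norm: "qq y \<le> (SUP k. norm (apply_bcontfun y k))"
  using qq_le[where y=y and n=0] by (simp add: aN_def)



lemma linf_iff: "linf s \<longleftrightarrow> (\<exists>b. \<forall>n. norm (s n) \<le> b)"
  unfolding linf_def bounded_iff by auto

lemma linf_bcontfun: "linf s \<Longrightarrow> s \<in> bcontfun"
  unfolding linf_def bcontfun_def by simp

lemma linf_add: "linf s \<Longrightarrow> linf t \<Longrightarrow> linf (\<lambda>n. s n + t n)"
proof -
  assume "linf s" "linf t"
  then obtain b1 b2 where b: "\<And>n. norm (s n) \<le> b1" "\<And>n. norm (t n) \<le> b2" unfolding linf_iff by blast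
  have "norm (s n + t n) \<le> b1 + b2" for n
    using norm_triangle_ineq[of "s n" "t n"] b[of n] by linarith
  then show ?thesis unfolding linf_iff by blast
qed

lemma linf_scaleC: fixes s :: "nat \<Rightarrow> 'a::complex_normed_vector" shows "linf s \<Longrightarrow> linf (\<lambda>n. c *\<^sub>C s n)"
proof -
  assume "linf s"
  then obtain b where b: "\<And>n. norm (s n) \<le> b" unfolding linf_iff by blast
  have "norm (c *\<^sub>C s n) \<le> cmod c * b" for n
  proof -
    have "norm (c *\<^sub>C s n) = cmod c * norm (s n)" by (rule norm_scaleC)
    also have "\<dots> \<le> cmod c * b" by (rule mult_left_mono[OF b norm_ge_zero])
    finally show ?thesis .
  qed
  then show ?thesis unfolding linf_iff by blast
qed

lemma linf_scaleR: "linf s \<Longrightarrow> linf (\<lambda>n. c *\<^sub>R s n)"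
proof -
  assume "linf s"
  then obtain b where b: "\<And>n. norm (s n) \<le> b" unfolding linf_iff by blast
  have "norm (c *\<^sub>R s n) \<le> \<bar>c\<bar> * b" for n
    unfolding norm_scaleR by (rule mult_left_mono[OF b abs_ge_zero])
  then show ?thesis unfolding linf_iff by blast
qed

lemma linf_shift: "linf s \<Longrightarrow> linf (\<lambda>n. s (n + k))"
  unfolding linf_iff by (metis (no_types))

lemma linf_const: "linf (\<lambda>n. v)"
  unfolding linf_iff by blast

lemma linf_norm_upper: "linf s \<Longrightarrow> norm (s k) \<le> linf_norm s"
  unfolding linf_norm_def
  by (rule cSUP_upper) (auto simp: linf_iff bdd_above_def)

lemma scaleC_decomp: fixes w :: "'a::complex_vector" shows "c *\<^sub>C w = Re c *\<^sub>R w + Im c *\<^sub>R (\<i> *\<^sub>C w)"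
proof -
  have "Re c *\<^sub>R w + Im c *\<^sub>R (\<i> *\<^sub>C w) = complex_of_real (Re c) *\<^sub>C w + (complex_of_real (Im c) * \<i>) *\<^sub>C w"
    by (simp add: scaleR_scaleC scaleC_scaleC)
  also have "\<dots> = (complex_of_real (Re c) + complex_of_real (Im c) * \<i>) *\<^sub>C w"
    by (simp add: scaleC_add_left)
  also have "complex_of_real (Re c) + complex_of_real (Im c) * \<i> = c"
    by (simp add: complex_eq_iff)
  finally show ?thesis by simp
qed

lemma ii_scaleC: fixes w :: "'a::complex_vector" shows "\<i> *\<^sub>C (\<i> *\<^sub>C w) = - w"
proof -
  have "\<i> *\<^sub>C (\<i> *\<^sub>C w) = (-1::real) *\<^sub>R w" by (simp add: scaleC_scaleC scaleR_scaleC)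
  then show ?thesis by simp
qed

lemma qq_tele:
  assumes "\<And>k. apply_bcontfun w k = h (Suc k) - h k" and "\<And>k. norm (h k) \<le> b"
  shows "qq w \<le> 0"
proof (rule ccontr)
  assume "\<not> qq w \<le> 0"
  then have pos: "qq w > 0" by simp
  obtain n where n: "2 * b / qq w < real n" using reals_Archimedean2 by blast
  have "aN (Suc n) w \<le> 2 * b"
    unfolding aN_def
  proof (rule cSUP_least)
    fix k
    have "(\<Sum>j<Suc n. apply_bcontfun w (k + j)) = (\<Sum>j<Suc n. h (Suc (k + j)) - h (k + j))"
      using assms(1) by simp
    also have "\<dots> = h (k + Suc n) - h (k + 0)"
      using sum_lessThan_telescope[of "\<lambda>j. h (k + j)" "Suc n"] by simp
    finally have "norm (\<Sum>j<Suc n. apply_bcontfun w (k + j)) = norm (h (k + Suc n) - h (k + 0))" by simp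
    also have "\<dots> \<le> norm (h (k + Suc n)) + norm (h (k + 0))" by (rule norm_triangle_ineq4)
    also have "\<dots> \<le> 2 * b" using assms(2)[of "k + Suc n"] assms(2)[of "k + 0"] by simp
    finally show "norm (\<Sum>j<Suc n. apply_bcontfun w (k + j)) \<le> 2 * b" .
  qed simp
  then have "qq w \<le> 2 * b / real (Suc n)" using qq_le[where y=w and n=n]
    by (smt (verit) divide_right_mono of_nat_0_le_iff)
  then have "qq w * real (Suc n) \<le> 2 * b" by (simp add: field_simps)
  moreover have "2 * b < qq w * real n" using n pos by (simp add: field_simps)
  ultimately show False using pos by (simp add: algebra_simps)
qed

lemma sep_banach_limit:
  fixes A :: "'a::complex_normed_vector set"
  assumes cA: "convex A" and clA: "closed A" and xA: "\<forall>n. x n \<in> A" and lx: "linf x" and vA: "v \<notin> A"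
  shows "\<exists>L. banach_limit L \<and> L x \<noteq> L (\<lambda>n. v)"
proof -
  obtain \<delta> where dpos: "\<delta> > 0" and dball: "ball v \<delta> \<subseteq> - A"
    using clA vA open_contains_ball[of "- A"] by auto
  define B :: "(nat \<Rightarrow> 'a) \<Rightarrow> (nat \<Rightarrow>\<^sub>C 'a)" where "B = Bcontfun"
  have appB: "linf s \<Longrightarrow> apply_bcontfun (B s) = s" for s
    unfolding B_def by (simp add: Bcontfun_inverse linf_bcontfun)
  have Badd: "linf s \<Longrightarrow> linf t \<Longrightarrow> B (\<lambda>n. s n + t n) = B s + B t" for s t
    by (rule bcontfun_eqI) (simp add: appB linf_add)
  have BscR: "linf s \<Longrightarrow> B (\<lambda>n. r *\<^sub>R s n) = r *\<^sub>R B s" for s r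
    by (rule bcontfun_eqI) (simp add: appB linf_scaleR)
  define z where "z = B x - B (\<lambda>n. v)"
  have sub: "\<And>a b. qq (a + b) \<le> qq a + qq b" by (rule qq_sub)
  have hom: "\<And>c a. c > 0 \<Longrightarrow> qq (c *\<^sub>R a) = c * qq a" by (rule qq_hom)
  obtain f where fadd: "\<And>a b. f (a + b) = f a + f b" and fsc: "\<And>c a. f (c *\<^sub>R a) = c * f a"
    and fle: "\<And>a. f a \<le> qq a" and fz: "f z = qq z"
    using hahn_banach[of qq z, OF sub hom] by blast
  have fdiff: "f (a - b) = f a - f b" for a b
    using fadd[of a "(-1) *\<^sub>R b"] fsc[of "-1" b] by simp
  define g where "g s = f (B s)" for s
  have gadd: "linf s \<Longrightarrow> linf t \<Longrightarrow> g (\<lambda>n. s n + t n) = g s + g t" for s t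
    by (simp add: g_def Badd fadd)
  have gscR: "linf s \<Longrightarrow> g (\<lambda>n. r *\<^sub>R s n) = r * g s" for s r
    by (simp add: g_def BscR fsc)
  have gneg: "linf s \<Longrightarrow> g (\<lambda>n. - s n) = - g s" for s
    using gscR[of s "-1"] by simp
  have gshift: "g (\<lambda>n. s (Suc n)) = g s" if ls: "linf s" for s
  proof -
    have ls': "linf (\<lambda>n. s (Suc n))" using linf_shift[OF ls, of 1] by simp
    obtain b where b: "\<And>n. norm (s n) \<le> b" using ls linf_iff by blast
    have "qq (B (\<lambda>n. s (Suc n)) - B s) \<le> 0"
      by (rule qq_tele[where h=s and b=b]) (simp_all add: appB ls ls' b)
    moreover have "qq (B s - B (\<lambda>n. s (Suc n))) \<le> 0"
      by (rule qq_tele[where h="\<lambda>n. - s n" and b=b]) (simp_all add: appB ls ls' b)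
    ultimately show ?thesis
      using fle[of "B (\<lambda>n. s (Suc n)) - B s"] fle[of "B s - B (\<lambda>n. s (Suc n))"]
      by (simp add: g_def fdiff)
  qed
  have gbound: "g s \<le> linf_norm s" if ls: "linf s" for s
  proof -
    have "g s \<le> qq (B s)" using fle g_def by simp
    also have "\<dots> \<le> (SUP k. norm (apply_bcontfun (B s) k))" by (rule qq_norm)
    finally show ?thesis by (simp add: appB ls linf_norm_def)
  qed
  have gsep: "g x - g (\<lambda>n. v) \<ge> \<delta>"
  proof -
    have "g x - g (\<lambda>n. v) = f z" by (simp add: g_def z_def fdiff)
    then have "g x - g (\<lambda>n. v) = qq z" using fz by simp
    moreover have "\<delta> \<le> qq z"
    proof (rule qq_ge)
      fix n
      let ?N = "Suc n"
      define avg where "avg = (\<Sum>j<?N. (1 / real ?N) *\<^sub>R x j)"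
      have "avg \<in> A" unfolding avg_def
        by (rule convex_sum[OF _ cA]) (auto simp: xA)
      then have "avg \<notin> ball v \<delta>" using dball by auto
      then have d: "\<delta> \<le> norm (avg - v)" by (simp add: dist_norm norm_minus_commute)
      have "(\<Sum>j<?N. apply_bcontfun z (0 + j)) = (\<Sum>j<?N. x j - v)"
        by (simp add: z_def appB lx linf_const)
      also have "\<dots> = real ?N *\<^sub>R (avg - v)"
        by (simp add: avg_def sum_subtractf scaleR_diff_right scaleR_sum_right[symmetric] sum_constant_scaleR scaleR_add_left)
      finally have "norm (\<Sum>j<?N. apply_bcontfun z (0 + j)) = real ?N * norm (avg - v)" by simp
      note eq = this
      have "real ?N * \<delta> \<le> real ?N * norm (avg - v)" by (rule mult_left_mono[OF d]) simp
      also have "\<dots> = norm (\<Sum>j<?N. apply_bcontfun z (0 + j))" using eq by simp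
      also have "\<dots> \<le> aN ?N z" by (rule aN_upper)
      finally have "real ?N * \<delta> \<le> aN ?N z" .
      then show "\<delta> \<le> aN ?N z / real ?N" by (simp add: field_simps)
    qed
    ultimately show ?thesis by simp
  qed
  define L where "L s = Complex (g s) (- g (\<lambda>n. \<i> *\<^sub>C s n))" for s
  have Lhom: "L (\<lambda>n. c *\<^sub>C s n) = c * L s" if ls: "linf s" for c s
  proof -
    have li: "linf (\<lambda>n. \<i> *\<^sub>C s n)" by (rule linf_scaleC[OF ls])
    have e1: "g (\<lambda>n. c *\<^sub>C s n) = Re c * g s + Im c * g (\<lambda>n. \<i> *\<^sub>C s n)"
      by (simp add: scaleC_decomp[of c] gadd gscR linf_scaleR ls li)
    have ln: "linf (\<lambda>n. - s n)" using linf_scaleR[OF ls, of "-1"] by simp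
    have e2a: "(\<lambda>n. \<i> *\<^sub>C (c *\<^sub>C s n)) = (\<lambda>n. Re c *\<^sub>R (\<i> *\<^sub>C s n) + Im c *\<^sub>R (- s n))"
    proof
      fix n
      have "\<i> *\<^sub>C (c *\<^sub>C s n) = c *\<^sub>C (\<i> *\<^sub>C s n)" by (simp add: scaleC_scaleC mult.commute)
      also have "\<dots> = Re c *\<^sub>R (\<i> *\<^sub>C s n) + Im c *\<^sub>R (\<i> *\<^sub>C (\<i> *\<^sub>C s n))" by (rule scaleC_decomp)
      finally show "\<i> *\<^sub>C (c *\<^sub>C s n) = Re c *\<^sub>R (\<i> *\<^sub>C s n) + Im c *\<^sub>R (- s n)" by (simp add: ii_scaleC)
    qed
    have e2: "g (\<lambda>n. \<i> *\<^sub>C (c *\<^sub>C s n)) = Re c * g (\<lambda>n. \<i> *\<^sub>C s n) - Im c * g s"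
      unfolding e2a gadd[OF linf_scaleR[OF li] linf_scaleR[OF ln]] gscR[OF li] gscR[OF ln] gneg[OF ls] by simp
    show ?thesis by (simp add: L_def e1 e2 complex_eq_iff algebra_simps)
  qed
  have Ladd: "L (\<lambda>n. s n + t n) = L s + L t" if "linf s" "linf t" for s t
    using that by (simp add: L_def scaleC_add_right gadd linf_scaleC complex_eq_iff)
  have Lshift: "L (\<lambda>n. s (Suc n)) = L s" if "linf s" for s
    using that gshift[OF linf_scaleC[OF that, of \<i>]] by (simp add: L_def gshift)
  have Lbound: "cmod (L s) \<le> linf_norm s" if ls: "linf s" for s
  proof (cases "L s = 0")
    case True then show ?thesis using linf_norm_upper[OF ls, of 0] norm_ge_zero[of "s 0"] by (simp del: norm_ge_zero)
  next
    case False
    define u where "u = cnj (L s) / complex_of_real (cmod (L s))"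
    have cu: "cmod u = 1" using False by (simp add: u_def norm_divide)
    have "u * L s = (L s * cnj (L s)) / complex_of_real (cmod (L s))"
      by (simp add: u_def mult.commute)
    also have "\<dots> = complex_of_real ((cmod (L s))\<^sup>2) / complex_of_real (cmod (L s))"
      by (simp only: complex_norm_square)
    also have "\<dots> = complex_of_real (cmod (L s))" using False by (simp add: power2_eq_square)
    finally have "u * L s = complex_of_real (cmod (L s))" .
    then have "L (\<lambda>n. u *\<^sub>C s n) = complex_of_real (cmod (L s))" using Lhom[OF ls] by simp
    then have "cmod (L s) = g (\<lambda>n. u *\<^sub>C s n)"
      by (metis L_def complex.sel(1) Re_complex_of_real)
    also have "\<dots> \<le> linf_norm (\<lambda>n. u *\<^sub>C s n)" by (rule gbound[OF linf_scaleC[OF ls]])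
    also have "\<dots> = linf_norm s" by (simp add: linf_norm_def norm_scaleC cu)
    finally show ?thesis .
  qed
  define L' where "L' s = (if linf s then L s else 0)" for s
  have "banach_limit L'"
    unfolding banach_limit_def L'_def
    by (simp add: Ladd Lhom Lbound Lshift linf_add linf_scaleC linf_shift[where k=1, simplified])
  moreover have "L' x \<noteq> L' (\<lambda>n. v)"
  proof
    assume "L' x = L' (\<lambda>n. v)"
    then have "Re (L x) = Re (L (\<lambda>n. v))" by (simp add: L'_def lx linf_const)
    then show False using gsep dpos by (simp add: L_def)
  qed
  ultimately show ?thesis by blast
qed



lemma bl_shiftk:
  assumes bl: "banach_limit L" and ly: "linf y"
  shows "L (\<lambda>n. y (n + k)) = L y"
proof (induction k)
  case 0 then show ?case by simp
next
  case (Suc k)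
  have "linf (\<lambda>n. y (n + k))" by (rule linf_shift[OF ly])
  then have "L (\<lambda>n. y (Suc n + k)) = L (\<lambda>n. y (n + k))"
    using bl unfolding banach_limit_def by blast
  then show ?case using Suc by simp
qed

lemma bl_null:
  fixes y :: "nat \<Rightarrow> 'a::complex_normed_vector"
  assumes bl: "banach_limit L" and lim: "y \<longlonglongrightarrow> 0" and ly: "linf y"
  shows "L y = 0"
proof (rule ccontr)
  assume ne: "L y \<noteq> 0"
  define e where "e = cmod (L y) / 2"
  have e: "e > 0" using ne by (simp add: e_def)
  obtain N where N: "\<And>n. n \<ge> N \<Longrightarrow> norm (y n) < e"
    using lim e unfolding LIMSEQ_iff by auto
  have ls: "linf (\<lambda>n. y (n + N))" by (rule linf_shift[OF ly])
  have "cmod (L y) = cmod (L (\<lambda>n. y (n + N)))" using bl_shiftk[OF bl ly] by simp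
  also have "\<dots> \<le> linf_norm (\<lambda>n. y (n + N))" using bl ls unfolding banach_limit_def by blast
  also have "\<dots> \<le> e" unfolding linf_norm_def
  proof (rule cSUP_least)
    fix n have "norm (y (n + N)) < e" by (rule N) simp
    then show "norm (y (n + N)) \<le> e" by simp
  qed simp
  finally show False using e_def e by simp
qed

lemma closed_iff_sa:
  fixes A :: "'a::complex_normed_vector set"
  assumes cA: "convex A"
  shows "closed A \<longleftrightarrow> sa_seq_closed A"
proof
  assume clA: "closed A"
  show "sa_seq_closed A"
    unfolding sa_seq_closed_def
  proof (intro allI impI)
    fix x v assume h: "(\<forall>n. x n \<in> A) \<and> linf x \<and> strongly_almost_convergent x v"
    show "v \<in> A"
    proof (rule ccontr)
      assume "v \<notin> A"
      then obtain L where "banach_limit L" "L x \<noteq> L (\<lambda>n. v)"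
        using sep_banach_limit[OF cA clA] h by blast
      then show False using h unfolding strongly_almost_convergent_def by blast
    qed
  qed
next
  assume sa: "sa_seq_closed A"
  show "closed A"
    unfolding closed_sequential_limits
  proof (intro allI impI)
    fix x l assume h: "(\<forall>n. x n \<in> A) \<and> x \<longlonglongrightarrow> l"
    then have xl: "x \<longlonglongrightarrow> l" by simp
    have lx: "linf x" unfolding linf_def
    proof -
      have "convergent x" using xl by (auto simp: convergent_def)
      then show "bounded (range x)" using convergent_imp_Bseq Bseq_eq_bounded by blast
    qed
    have "strongly_almost_convergent x l"
      unfolding strongly_almost_convergent_def
    proof (intro conjI allI impI lx)
      fix L :: "(nat \<Rightarrow> 'a) \<Rightarrow> complex" assume bl: "banach_limit L"
      define y where "y n = x n + (-1::complex) *\<^sub>C l" for n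
      have ly: "linf y" unfolding y_def by (rule linf_add[OF lx linf_const])
      have yeq: "y n = x n - l" for n
      proof -
        have "(-1::complex) *\<^sub>C l = (-1::real) *\<^sub>R l" by (simp add: scaleR_scaleC)
        then show ?thesis by (simp add: y_def)
      qed
      have y0: "y \<longlonglongrightarrow> 0" unfolding yeq using xl by (simp add: LIM_zero)
      have lc: "linf (\<lambda>n. (-1::complex) *\<^sub>C l)" by (rule linf_const)
      have a1: "L y = L x + L (\<lambda>n. (-1::complex) *\<^sub>C l)"
        unfolding y_def using bl lx lc unfolding banach_limit_def by blast
      have a2: "L (\<lambda>n. (-1::complex) *\<^sub>C l) = (-1) * L (\<lambda>n. l)"
        using bl linf_const[of l] unfolding banach_limit_def by blast
      have "L y = L x + (-1) * L (\<lambda>n. l)" using a1 a2 by simp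
      then have "L x = L (\<lambda>n. l)" using bl_null[OF bl y0 ly] by simp
      then show "L x = L (\<lambda>n. l)" .
    qed
    then show "l \<in> A" using sa h lx unfolding sa_seq_closed_def by blast
  qed
qed

theorem mainTheorem16:
  fixes A :: "'a::complex_normed_vector set"
  assumes "convex A"
  shows "(closed A \<longleftrightarrow> sa_seq_closed A) \<and>
         (\<forall>S :: 'a set. csubspace S \<longrightarrow> (closed S \<longleftrightarrow> sa_seq_closed S))"
proof (intro conjI allI impI)
  show "closed A \<longleftrightarrow> sa_seq_closed A" by (rule closed_iff_sa[OF assms])
next
  fix S :: "'a set" assume cs: "csubspace S"
  have "convex S"
  proof (rule convexI)
    fix x y and u v :: real assume "x \<in> S" "y \<in> S"
    then show "u *\<^sub>R x + v *\<^sub>R y \<in> S"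
    proof -
      have "complex_of_real u *\<^sub>C x \<in> S" "complex_of_real v *\<^sub>C y \<in> S"
        using cs \<open>x \<in> S\<close> \<open>y \<in> S\<close> unfolding csubspace_def by blast+
      then show ?thesis using cs unfolding csubspace_def scaleR_scaleC by blast
    qed
  qed
  then show "closed S \<longleftrightarrow> sa_seq_closed S" by (rule closed_iff_sa)
qed


end
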